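(* Let $S$ be a $\Gamma$-semiring with zero having a left unity and a right unity, and let $L$ be its left operator semiring. Let $\sigma,\sigma_1,\sigma_2\in FI(S)$ and $\mu,\mu_1,\mu_2\in FI(L)$. Then: (i) $\sigma^{+'}\in FI(L)$; moreover, if $\sigma$ is non-constant then $\sigma^{+'}$ is non-constant; (ii) $(\sigma^{+'})^{+}=\sigma$; (iii) $\sigma_1\neq\sigma_2$ implies $\sigma_1^{+'}\neq\sigma_2^{+'}$; (iv) $(\sigma_1\oplus\sigma_2)^{+'}=\sigma_1^{+'}\oplus\sigma_2^{+'}$; (v) $(\sigma_1\cap\sigma_2)^{+'}=\sigma_1^{+'}\cap\sigma_2^{+'}$; (vi) $\sigma_1\subseteq\sigma_2$ implies $\sigma_1^{+'}\subseteq\sigma_2^{+'}$; (vii) $\mu^{+}\in FI(S)$; moreover, if $\mu$ is non-constant then $\mu^{+}$ is non-constant; (viii) $(\mu^{+})^{+'}=\mu$; (ix) $\mu_1\subseteq\mu_2$ implies $\mu_1^{+}\subseteq\mu_2^{+}$.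
   Context: A $\Gamma$-semiring: $S$ and $\Gamma$ are additive commutative semigroups with a map $S\times\Gamma\times S\to S$, $(a,\alpha,b)\mapsto a\alpha b$, such that $(a+b)\alpha c=a\alpha c+b\alpha c$, $a\alpha(b+c)=a\alpha b+a\alpha c$, $a(\alpha+\beta)b=a\alpha b+a\beta b$, $a\alpha(b\beta c)=(a\alpha b)\beta c$. With zero: $(S,+)$, $(\Gamma,+)$ are monoids, $0_S\alpha x=0_S=x\alpha0_S$, $x0_\Gamma y=0_S$. Left operator semiring $L$: $F$ is the free additive commutative semigroup on $S\times\Gamma$; $\sum_i(x_i,\alpha_i)\,\rho\,\sum_j(y_j,\beta_j)$ iff $\sum_ix_i\alpha_ia=\sum_jy_j\beta_ja$ for all $a\in S$; $L=F/\rho$, classes written $\sum_i[x_i,\alpha_i]$, with multiplication $(\sum_i[x_i,\alpha_i])(\sum_j[y_j,\beta_j])=\sum_{i,j}[x_i\alpha_iy_j,\beta_j]$; its zero is $[0,\gamma]$ (any $\gamma\in\Gamma$). A left unity of $S$ is $\sum_i[e_i,\delta_i]\in L$ with $\sum_ie_i\delta_ia=a$ for all $a\in S$; a right unity is a finite family $\gamma_j\in\Gamma,f_j\in S$ with $\sum_ja\gamma_jf_j=a$ for all $a\in S$. A fuzzy subset is a map into $[0,1]$. A fuzzy ideal of $S$ is a fuzzy subset $\mu$, not identically $0$, with $\mu(x+y)\ge\min[\mu(x),\mu(y)]$, $\mu(x\gamma y)\ge\mu(y)$ and $\mu(x\gamma y)\ge\mu(x)$ for all $x,y\in S,\gamma\in\Gamma$.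 A fuzzy ideal of the semiring $L$ is a fuzzy subset $\mu$, not identically $0$, with $\mu(p+q)\ge\min[\mu(p),\mu(q)]$, $\mu(pq)\ge\mu(q)$, $\mu(pq)\ge\mu(p)$. Convention: every fuzzy ideal of $S$ or of $L$ is assumed to satisfy $\mu(0)=1$. $FI(S)$, $FI(L)$ denote the sets of fuzzy ideals. For a fuzzy subset $\mu$ of $L$: $\mu^{+}(x)=\inf_{\gamma\in\Gamma}\mu([x,\gamma])$ ($x\in S$). For a fuzzy subset $\sigma$ of $S$: $\sigma^{+'}(\sum_i[x_i,\alpha_i])=\inf_{s\in S}\sigma(\sum_ix_i\alpha_is)$. For fuzzy ideals $\mu_1,\mu_2$ (of $S$, resp. of $L$): $(\mu_1\oplus\mu_2)(x)=\sup\{\min[\mu_1(u),\mu_2(v)]:x=u+v\}$; $\cap$ is the pointwise minimum and $\subseteq$ is pointwise $\le$. *)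

theory Defs
  imports Complex_Main "HOL-Library.Multiset"
begin

text \<open>A Gamma-semiring with zero: the carriers S and Gamma are the types 's and 'g,
  both commutative monoids under +, with ternary operation tri a \<alpha> b = a \<alpha> b.\<close>

definition gamma_semiring_zero :: "('s::comm_monoid_add \<Rightarrow> 'g::comm_monoid_add \<Rightarrow> 's \<Rightarrow> 's) \<Rightarrow> bool" where
  "gamma_semiring_zero tri \<longleftrightarrow>
     (\<forall>a b c \<alpha>. tri (a + b) \<alpha> c = tri a \<alpha> c + tri b \<alpha> c) \<and>
     (\<forall>a b c \<alpha>. tri a \<alpha> (b + c) = tri a \<alpha> b + tri a \<alpha> c) \<and>
     (\<forall>a b \<alpha> \<beta>. tri a (\<alpha> + \<beta>) b = tri a \<alpha> b + tri a \<beta> b) \<and>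
     (\<forall>a b c \<alpha> \<beta>. tri a \<alpha> (tri b \<beta> c) = tri (tri a \<alpha> b) \<beta> c) \<and>
     (\<forall>x \<alpha>. tri 0 \<alpha> x = 0 \<and> tri x \<alpha> 0 = 0) \<and>
     (\<forall>x y. tri x 0 y = 0)"

text \<open>Elements of the free additive commutative semigroup F on S \<times> Gamma are the
  nonempty finite multisets of pairs; T evaluated at a is \<Sum> x_i \<alpha>_i a.\<close>

definition gev :: "('s::comm_monoid_add \<Rightarrow> 'g \<Rightarrow> 's \<Rightarrow> 's) \<Rightarrow> ('s \<times> 'g) multiset \<Rightarrow> 's \<Rightarrow> 's" where
  "gev tri T a = sum_mset (image_mset (\<lambda>(x, \<alpha>). tri x \<alpha> a) T)"

definition Fset :: "('s \<times> 'g) multiset set" where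
  "Fset = {T. T \<noteq> {#}}"

definition rho :: "('s::comm_monoid_add \<Rightarrow> 'g \<Rightarrow> 's \<Rightarrow> 's) \<Rightarrow> (('s \<times> 'g) multiset \<times> ('s \<times> 'g) multiset) set" where
  "rho tri = {(T, U). T \<in> Fset \<and> U \<in> Fset \<and> (\<forall>a. gev tri T a = gev tri U a)}"

type_synonym ('s, 'g) lop = "('s \<times> 'g) multiset set"

definition Lset :: "('s::comm_monoid_add \<Rightarrow> 'g \<Rightarrow> 's \<Rightarrow> 's) \<Rightarrow> ('s, 'g) lop set" where
  "Lset tri = Fset // rho tri"

definition cls :: "('s::comm_monoid_add \<Rightarrow> 'g \<Rightarrow> 's \<Rightarrow> 's) \<Rightarrow> ('s \<times> 'g) multiset \<Rightarrow> ('s, 'g) lop" where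
  "cls tri T = rho tri `` {T}"

definition rep :: "('s, 'g) lop \<Rightarrow> ('s \<times> 'g) multiset" where
  "rep P = (SOME T. T \<in> P)"

definition L_add :: "('s::comm_monoid_add \<Rightarrow> 'g \<Rightarrow> 's \<Rightarrow> 's) \<Rightarrow> ('s, 'g) lop \<Rightarrow> ('s, 'g) lop \<Rightarrow> ('s, 'g) lop" where
  "L_add tri P Q = cls tri (rep P + rep Q)"

definition F_mult :: "('s::comm_monoid_add \<Rightarrow> 'g \<Rightarrow> 's \<Rightarrow> 's) \<Rightarrow> ('s \<times> 'g) multiset \<Rightarrow> ('s \<times> 'g) multiset \<Rightarrow> ('s \<times> 'g) multiset" where
  "F_mult tri T U = sum_mset (image_mset (\<lambda>(x, \<alpha>). image_mset (\<lambda>(y, \<beta>). (tri x \<alpha> y, \<beta>)) U) T)"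

definition L_mult :: "('s::comm_monoid_add \<Rightarrow> 'g \<Rightarrow> 's \<Rightarrow> 's) \<Rightarrow> ('s, 'g) lop \<Rightarrow> ('s, 'g) lop \<Rightarrow> ('s, 'g) lop" where
  "L_mult tri P Q = cls tri (F_mult tri (rep P) (rep Q))"

text \<open>Zero of L: [0,\<gamma>] (any \<gamma>; we take \<gamma> = 0).\<close>

definition L_zero :: "('s::comm_monoid_add \<Rightarrow> 'g::zero \<Rightarrow> 's \<Rightarrow> 's) \<Rightarrow> ('s, 'g) lop" where
  "L_zero tri = cls tri {#(0, 0)#}"

definition has_left_unity :: "('s::comm_monoid_add \<Rightarrow> 'g \<Rightarrow> 's \<Rightarrow> 's) \<Rightarrow> bool" where
  "has_left_unity tri \<longleftrightarrow> (\<exists>P \<in> Lset tri. \<forall>a. gev tri (rep P) a = a)"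

definition has_right_unity :: "('s::comm_monoid_add \<Rightarrow> 'g \<Rightarrow> 's \<Rightarrow> 's) \<Rightarrow> bool" where
  "has_right_unity tri \<longleftrightarrow>
     (\<exists>R :: ('g \<times> 's) multiset. \<forall>a. sum_mset (image_mset (\<lambda>(\<gamma>, f). tri a \<gamma> f) R) = a)"

definition fuzzy_ideal_S :: "('s::comm_monoid_add \<Rightarrow> 'g \<Rightarrow> 's \<Rightarrow> 's) \<Rightarrow> ('s \<Rightarrow> real) \<Rightarrow> bool" where
  "fuzzy_ideal_S tri \<sigma> \<longleftrightarrow>
     (\<forall>x. 0 \<le> \<sigma> x \<and> \<sigma> x \<le> 1) \<and> (\<exists>x. \<sigma> x \<noteq> 0) \<and>
     (\<forall>x y. \<sigma> (x + y) \<ge> min (\<sigma> x) (\<sigma> y)) \<and>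
     (\<forall>x y \<gamma>. \<sigma> (tri x \<gamma> y) \<ge> \<sigma> y \<and> \<sigma> (tri x \<gamma> y) \<ge> \<sigma> x) \<and>
     \<sigma> 0 = 1"

definition fuzzy_ideal_L :: "('s::comm_monoid_add \<Rightarrow> 'g::comm_monoid_add \<Rightarrow> 's \<Rightarrow> 's) \<Rightarrow> (('s, 'g) lop \<Rightarrow> real) \<Rightarrow> bool" where
  "fuzzy_ideal_L tri \<mu> \<longleftrightarrow>
     (\<forall>P \<in> Lset tri. 0 \<le> \<mu> P \<and> \<mu> P \<le> 1) \<and> (\<exists>P \<in> Lset tri. \<mu> P \<noteq> 0) \<and>
     (\<forall>P \<in> Lset tri. \<forall>Q \<in> Lset tri. \<mu> (L_add tri P Q) \<ge> min (\<mu> P) (\<mu> Q)) \<and>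
     (\<forall>P \<in> Lset tri. \<forall>Q \<in> Lset tri. \<mu> (L_mult tri P Q) \<ge> \<mu> Q \<and> \<mu> (L_mult tri P Q) \<ge> \<mu> P) \<and>
     \<mu> (L_zero tri) = 1"

definition plusL :: "('s::comm_monoid_add \<Rightarrow> 'g \<Rightarrow> 's \<Rightarrow> 's) \<Rightarrow> (('s, 'g) lop \<Rightarrow> real) \<Rightarrow> 's \<Rightarrow> real" where
  "plusL tri \<mu> x = (INF \<gamma>. \<mu> (cls tri {#(x, \<gamma>)#}))"

definition plusS :: "('s::comm_monoid_add \<Rightarrow> 'g \<Rightarrow> 's \<Rightarrow> 's) \<Rightarrow> ('s \<Rightarrow> real) \<Rightarrow> ('s, 'g) lop \<Rightarrow> real" where
  "plusS tri \<sigma> P = (INF s. \<sigma> (gev tri (rep P) s))"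

definition oplusS :: "('s::comm_monoid_add \<Rightarrow> real) \<Rightarrow> ('s \<Rightarrow> real) \<Rightarrow> 's \<Rightarrow> real" where
  "oplusS \<sigma>1 \<sigma>2 x = (SUP (u, v) \<in> {(u, v). x = u + v}. min (\<sigma>1 u) (\<sigma>2 v))"

definition oplusL :: "('s::comm_monoid_add \<Rightarrow> 'g \<Rightarrow> 's \<Rightarrow> 's) \<Rightarrow> (('s, 'g) lop \<Rightarrow> real) \<Rightarrow> (('s, 'g) lop \<Rightarrow> real) \<Rightarrow> ('s, 'g) lop \<Rightarrow> real" where
  "oplusL tri \<mu>1 \<mu>2 P =
     (SUP (U, V) \<in> {(U, V). U \<in> Lset tri \<and> V \<in> Lset tri \<and> P = L_add tri U V}. min (\<mu>1 U) (\<mu>2 V))"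

end

theory Submission
  imports Defs
begin

locale gsz =
  fixes tri :: "'s::comm_monoid_add \<Rightarrow> 'g::comm_monoid_add \<Rightarrow> 's \<Rightarrow> 's"
  assumes gs: "gamma_semiring_zero tri"
begin

lemma ld: "tri (a + b) \<alpha> c = tri a \<alpha> c + tri b \<alpha> c"
  and rd: "tri a \<alpha> (b + c) = tri a \<alpha> b + tri a \<alpha> c"
  and asc: "tri a \<alpha> (tri b \<beta> c) = tri (tri a \<alpha> b) \<beta> c"
  and z1[simp]: "tri 0 \<alpha> x = 0" and z2[simp]: "tri x \<alpha> 0 = 0"
  using gs unfolding gamma_semiring_zero_def by auto

lemma gev_add[simp]: "gev tri (M + N) a = gev tri M a + gev tri N a"
  by (simp add: gev_def)
lemma gev_add_mset[simp]: "gev tri (add_mset (x,\<gamma>) M) a = tri x \<gamma> a + gev tri M a"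
  by (simp add: gev_def)
lemma gev_empty[simp]: "gev tri {#} a = 0"
  by (simp add: gev_def)

lemma gev_pt_add: "gev tri T (a + b) = gev tri T a + gev tri T b"
  by (induction T) (auto simp: rd ac_simps)
lemma gev_pt_zero[simp]: "gev tri T 0 = 0"
  by (induction T) auto

lemma tri_gev_right: "tri x \<alpha> (gev tri U a) = gev tri (image_mset (\<lambda>(y,\<beta>). (tri x \<alpha> y, \<beta>)) U) a"
  by (induction U) (auto simp: rd asc)

lemma F_mult_add[simp]: "F_mult tri (add_mset (x,\<alpha>) T) U = image_mset (\<lambda>(y, \<beta>). (tri x \<alpha> y, \<beta>)) U + F_mult tri T U"
  by (simp add: F_mult_def)

lemma gev_Fmult: "gev tri (F_mult tri T U) a = gev tri T (gev tri U a)"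
  by (induction T) (auto simp: F_mult_def tri_gev_right)

lemma Fmult_ne: "T \<noteq> {#} \<Longrightarrow> U \<noteq> {#} \<Longrightarrow> F_mult tri T U \<noteq> {#}"
  by (cases T) (auto simp: F_mult_def)

lemma gev_tri_left: "tri (gev tri T s) \<gamma> a = gev tri T (tri s \<gamma> a)"
  by (induction T) (auto simp: ld asc)

lemma gev_img_gev: "gev tri (image_mset (\<lambda>(e,\<delta>). (gev tri T e, \<delta>)) M) a = gev tri T (gev tri M a)"
  by (induction M) (auto simp: gev_tri_left gev_pt_add)

lemma gev_decomp:
  assumes "\<forall>(e,\<delta>)\<in>#M. fu (g e) + fv (g e) = g e"
  shows "gev tri (image_mset (\<lambda>(e,\<delta>). (fu (g e), \<delta>)) M) a + gev tri (image_mset (\<lambda>(e,\<delta>). (fv (g e), \<delta>)) M) a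
     = gev tri (image_mset (\<lambda>(e,\<delta>). (g e, \<delta>)) M) a"
  using assms
proof (induction M)
  case empty then show ?case by simp
next
  case (add m M)
  obtain e \<delta> where m: "m = (e,\<delta>)" by force
  have "fu (g e) + fv (g e) = g e" using add.prems m by auto
  then have "tri (g e) \<delta> a = tri (fu (g e)) \<delta> a + tri (fv (g e)) \<delta> a" by (metis ld)
  with add show ?case by (auto simp: m ac_simps)
qed

lemma cls_eq: "M \<in> Fset \<Longrightarrow> cls tri M = {N \<in> Fset. gev tri N = gev tri M}"
  by (auto simp: cls_def rho_def fun_eq_iff)

lemma cls_Lset: "M \<in> Fset \<Longrightarrow> cls tri M \<in> Lset tri"
  unfolding Lset_def cls_def by (rule quotientI)

lemma rep_cls: "M \<in> Fset \<Longrightarrow> rep (cls tri M) \<in> Fset \<and> gev tri (rep (cls tri M)) = gev tri M"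
proof -
  assume M: "M \<in> Fset"
  then have "M \<in> cls tri M" by (simp add: cls_eq)
  then have "rep (cls tri M) \<in> cls tri M" unfolding rep_def by (rule someI)
  with M show ?thesis by (simp add: cls_eq)
qed

lemma cls_eqI: "M \<in> Fset \<Longrightarrow> N \<in> Fset \<Longrightarrow> gev tri M = gev tri N \<Longrightarrow> cls tri M = cls tri N"
  by (simp add: cls_eq)

lemma Lset_rep: "P \<in> Lset tri \<Longrightarrow> rep P \<in> Fset \<and> P = cls tri (rep P)"
proof -
  assume "P \<in> Lset tri"
  then obtain M where M: "M \<in> Fset" "P = cls tri M"
    unfolding Lset_def cls_def by (auto elim: quotientE)
  then show ?thesis using rep_cls[OF M(1)] cls_eqI by metis
qed

lemma Lset_eq: "P \<in> Lset tri \<Longrightarrow> Q \<in> Lset tri \<Longrightarrow> gev tri (rep P) = gev tri (rep Q) \<Longrightarrow> P = Q"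
  by (metis Lset_rep cls_eqI)

lemma Fset_ne[simp]: "M \<in> Fset \<longleftrightarrow> M \<noteq> {#}" by (simp add: Fset_def)

lemma L_add_Lset: "P \<in> Lset tri \<Longrightarrow> Q \<in> Lset tri \<Longrightarrow> L_add tri P Q \<in> Lset tri"
  and L_add_gev: "P \<in> Lset tri \<Longrightarrow> Q \<in> Lset tri \<Longrightarrow> gev tri (rep (L_add tri P Q)) a = gev tri (rep P) a + gev tri (rep Q) a"
  using Lset_rep[of P] Lset_rep[of Q] rep_cls[of "rep P + rep Q"] cls_Lset[of "rep P + rep Q"]
  by (auto simp: L_add_def)

lemma L_mult_Lset: "P \<in> Lset tri \<Longrightarrow> Q \<in> Lset tri \<Longrightarrow> L_mult tri P Q \<in> Lset tri"
  and L_mult_gev: "P \<in> Lset tri \<Longrightarrow> Q \<in> Lset tri \<Longrightarrow> gev tri (rep (L_mult tri P Q)) a = gev tri (rep P) (gev tri (rep Q) a)"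
  using Lset_rep[of P] Lset_rep[of Q] rep_cls[of "F_mult tri (rep P) (rep Q)"] cls_Lset[of "F_mult tri (rep P) (rep Q)"]
    Fmult_ne[of "rep P" "rep Q"]
  by (auto simp: L_mult_def gev_Fmult)

lemma sng_Lset: "cls tri {#(x,\<gamma>)#} \<in> Lset tri"
  and sng_gev: "gev tri (rep (cls tri {#(x,\<gamma>)#})) a = tri x \<gamma> a"
  using rep_cls[of "{#(x,\<gamma>)#}"] cls_Lset[of "{#(x,\<gamma>)#}"] by auto

lemma zero_Lset: "L_zero tri \<in> Lset tri"
  and zero_gev: "gev tri (rep (L_zero tri)) a = 0"
  using sng_Lset[of 0 0] sng_gev[of 0 0] by (auto simp: L_zero_def)

lemma sng0: "cls tri {#(0,\<gamma>)#} = L_zero tri"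
  by (rule Lset_eq[OF sng_Lset zero_Lset]) (simp add: fun_eq_iff sng_gev zero_gev)


lemma fS: assumes "fuzzy_ideal_S tri \<sigma>"
  shows "0 \<le> \<sigma> x" "\<sigma> x \<le> 1" "min (\<sigma> x) (\<sigma> y) \<le> \<sigma> (x + y)"
    "\<sigma> y \<le> \<sigma> (tri x \<gamma> y)" "\<sigma> x \<le> \<sigma> (tri x \<gamma> y)" "\<sigma> 0 = 1"
  using assms unfolding fuzzy_ideal_S_def by auto

lemma fL: assumes "fuzzy_ideal_L tri \<mu>" "P \<in> Lset tri" "Q \<in> Lset tri"
  shows "0 \<le> \<mu> P" "\<mu> P \<le> 1" "min (\<mu> P) (\<mu> Q) \<le> \<mu> (L_add tri P Q)"
    "\<mu> Q \<le> \<mu> (L_mult tri P Q)" "\<mu> P \<le> \<mu> (L_mult tri P Q)" "\<mu> (L_zero tri) = 1"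
  using assms unfolding fuzzy_ideal_L_def by auto

lemma sigma_gev_ge:
  assumes "fuzzy_ideal_S tri \<sigma>" "c \<le> 1" "\<forall>(x,\<alpha>)\<in>#M. c \<le> \<sigma> (tri x \<alpha> a)"
  shows "c \<le> \<sigma> (gev tri M a)"
  using assms(3)
proof (induction M)
  case empty then show ?case using fS(6)[OF assms(1)] assms(2) by simp
next
  case (add m M)
  obtain x \<alpha> where m: "m = (x,\<alpha>)" by force
  have "c \<le> \<sigma> (tri x \<alpha> a)" "c \<le> \<sigma> (gev tri M a)" using add m by auto
  then show ?case using fS(3)[OF assms(1), of "tri x \<alpha> a" "gev tri M a"] m by simp
qed

lemma sigma_sum_witness:
  assumes "fuzzy_ideal_S tri \<sigma>" "M \<noteq> {#}"
  shows "\<exists>m\<in>#M. \<sigma> (h m) \<le> \<sigma> (sum_mset (image_mset h M))"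
  using assms(2)
proof (induction M)
  case empty then show ?case by simp
next
  case (add m M)
  show ?case
  proof (cases "M = {#}")
    case True then show ?thesis by simp
  next
    case False
    then obtain m' where m': "m' \<in># M" "\<sigma> (h m') \<le> \<sigma> (sum_mset (image_mset h M))" using add by auto
    have "min (\<sigma> (h m)) (\<sigma> (sum_mset (image_mset h M))) \<le> \<sigma> (sum_mset (image_mset h (add_mset m M)))"
      using fS(3)[OF assms(1)] by simp
    then show ?thesis using m' by (cases "\<sigma> (h m) \<le> \<sigma> (sum_mset (image_mset h M))") force+
  qed
qed

lemma mu_cls_ge:
  assumes "fuzzy_ideal_L tri \<mu>" "M \<noteq> {#}" "\<forall>m\<in>#M. c \<le> \<mu> (cls tri {#m#})"
  shows "c \<le> \<mu> (cls tri M)"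
  using assms(2,3)
proof (induction M)
  case empty then show ?case by simp
next
  case (add m M)
  show ?case
  proof (cases "M = {#}")
    case True then show ?thesis using add by simp
  next
    case False
    then have IH: "c \<le> \<mu> (cls tri M)" using add by auto
    have A: "cls tri M \<in> Lset tri" "cls tri {#m#} \<in> Lset tri" using False by (auto intro: cls_Lset)
    have "cls tri (add_mset m M) = L_add tri (cls tri M) (cls tri {#m#})"
    proof (rule Lset_eq[OF cls_Lset L_add_Lset[OF A]])
      show "add_mset m M \<in> Fset" by simp
      have "gev tri (add_mset m M) a = gev tri M a + gev tri {#m#} a" for a
        by (simp add: gev_def add.commute)
      then show "gev tri (rep (cls tri (add_mset m M))) = gev tri (rep (L_add tri (cls tri M) (cls tri {#m#})))"
        using False rep_cls[of "add_mset m M"] rep_cls[of M] rep_cls[of "{#m#}"]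
        by (simp add: fun_eq_iff L_add_gev[OF A])
    qed
    moreover have "c \<le> \<mu> (cls tri {#m#})" using add by auto
    ultimately show ?thesis using fL(3)[OF assms(1) A] IH by simp
  qed
qed

lemma plusS_lower: "fuzzy_ideal_S tri \<sigma> \<Longrightarrow> plusS tri \<sigma> P \<le> \<sigma> (gev tri (rep P) s)"
  unfolding plusS_def by (rule cINF_lower) (auto intro!: bdd_belowI2 fS(1))
lemma plusS_greatest: "(\<And>s. c \<le> \<sigma> (gev tri (rep P) s)) \<Longrightarrow> c \<le> plusS tri \<sigma> P"
  unfolding plusS_def by (rule cINF_greatest) auto
lemma plusS_bounds: "fuzzy_ideal_S tri \<sigma> \<Longrightarrow> 0 \<le> plusS tri \<sigma> P \<and> plusS tri \<sigma> P \<le> 1"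
  using plusS_greatest[of 0 \<sigma> P] plusS_lower[of \<sigma> P 0] fS(1,2)[of \<sigma>] by (meson order_trans)

lemma plusL_lower: "fuzzy_ideal_L tri \<mu> \<Longrightarrow> plusL tri \<mu> x \<le> \<mu> (cls tri {#(x,\<gamma>)#})"
  unfolding plusL_def by (rule cINF_lower) (auto intro!: bdd_belowI2 fL(1) sng_Lset)
lemma plusL_greatest: "(\<And>\<gamma>. c \<le> \<mu> (cls tri {#(x,\<gamma>)#})) \<Longrightarrow> c \<le> plusL tri \<mu> x"
  unfolding plusL_def by (rule cINF_greatest) auto
lemma plusL_bounds: "fuzzy_ideal_L tri \<mu> \<Longrightarrow> 0 \<le> plusL tri \<mu> x \<and> plusL tri \<mu> x \<le> 1"
proof -
  assume f: "fuzzy_ideal_L tri \<mu>"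
  have "0 \<le> plusL tri \<mu> x" by (rule plusL_greatest) (rule fL(1)[OF f sng_Lset sng_Lset])
  moreover have "plusL tri \<mu> x \<le> 1"
    using plusL_lower[OF f, of x 0] fL(2)[OF f sng_Lset sng_Lset, of x 0] by linarith
  ultimately show ?thesis by simp
qed


lemma plusS_ideal: assumes f: "fuzzy_ideal_S tri \<sigma>"
  shows "fuzzy_ideal_L tri (plusS tri \<sigma>)"
proof -
  have Z: "plusS tri \<sigma> (L_zero tri) = 1"
    using plusS_bounds[OF f, of "L_zero tri"] plusS_greatest[of 1 \<sigma> "L_zero tri"] fS(6)[OF f]
    by (simp add: zero_gev)
  have A: "min (plusS tri \<sigma> P) (plusS tri \<sigma> Q) \<le> plusS tri \<sigma> (L_add tri P Q)"
    if "P \<in> Lset tri" "Q \<in> Lset tri" for P Q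
  proof (rule plusS_greatest)
    fix s
    have "min (plusS tri \<sigma> P) (plusS tri \<sigma> Q) \<le> min (\<sigma> (gev tri (rep P) s)) (\<sigma> (gev tri (rep Q) s))"
      using plusS_lower[OF f] by (meson min.mono)
    also have "\<dots> \<le> \<sigma> (gev tri (rep (L_add tri P Q)) s)"
      using fS(3)[OF f] by (simp add: L_add_gev[OF that])
    finally show "min (plusS tri \<sigma> P) (plusS tri \<sigma> Q) \<le> \<sigma> (gev tri (rep (L_add tri P Q)) s)" .
  qed
  have M: "plusS tri \<sigma> Q \<le> plusS tri \<sigma> (L_mult tri P Q) \<and> plusS tri \<sigma> P \<le> plusS tri \<sigma> (L_mult tri P Q)"
    if "P \<in> Lset tri" "Q \<in> Lset tri" for P Q
  proof
    show "plusS tri \<sigma> Q \<le> plusS tri \<sigma> (L_mult tri P Q)"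
    proof (rule plusS_greatest)
      fix s
      have "plusS tri \<sigma> Q \<le> \<sigma> (gev tri (rep Q) s)" by (rule plusS_lower[OF f])
      also have "\<dots> \<le> \<sigma> (gev tri (rep P) (gev tri (rep Q) s))"
        apply (rule sigma_gev_ge[OF f fS(2)[OF f]])
        using fS(4)[OF f] by auto
      finally show "plusS tri \<sigma> Q \<le> \<sigma> (gev tri (rep (L_mult tri P Q)) s)"
        by (simp add: L_mult_gev[OF that])
    qed
    show "plusS tri \<sigma> P \<le> plusS tri \<sigma> (L_mult tri P Q)"
      by (rule plusS_greatest) (simp add: L_mult_gev[OF that] plusS_lower[OF f])
  qed
  show ?thesis unfolding fuzzy_ideal_L_def
  proof (intro conjI ballI)
    show "\<exists>P\<in>Lset tri. plusS tri \<sigma> P \<noteq> 0" using Z zero_Lset by force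
  qed (use plusS_bounds[OF f] Z A M in auto)
qed

lemma plusL_plusS: assumes f: "fuzzy_ideal_S tri \<sigma>" and ru: "has_right_unity tri"
  shows "plusL tri (plusS tri \<sigma>) = \<sigma>"
proof
  fix x
  have fl: "fuzzy_ideal_L tri (plusS tri \<sigma>)" by (rule plusS_ideal[OF f])
  have ge: "\<sigma> x \<le> plusL tri (plusS tri \<sigma>) x"
    by (rule plusL_greatest, rule plusS_greatest) (simp add: sng_gev fS(5)[OF f])
  obtain R where R: "\<forall>a. sum_mset (image_mset (\<lambda>(\<gamma>, f). tri a \<gamma> f) R) = a"
    using ru unfolding has_right_unity_def by blast
  have le: "plusL tri (plusS tri \<sigma>) x \<le> \<sigma> x"
  proof (cases "R = {#}")
    case True
    then have "x = 0" using R by auto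
    then show ?thesis using plusL_bounds[OF fl, of x] fS(6)[OF f] by simp
  next
    case False
    from sigma_sum_witness[OF f False, of "\<lambda>(\<gamma>, f). tri x \<gamma> f"] R
    obtain \<gamma> g where "(\<gamma>,g) \<in># R" "\<sigma> (tri x \<gamma> g) \<le> \<sigma> x" by auto
    then show ?thesis
      using plusL_lower[OF fl, of x \<gamma>] plusS_lower[OF f, of "cls tri {#(x,\<gamma>)#}" g]
      by (simp add: sng_gev)
  qed
  from ge le show "plusL tri (plusS tri \<sigma>) x = \<sigma> x" by simp
qed

lemma plusL_ideal: assumes f: "fuzzy_ideal_L tri \<mu>"
  shows "fuzzy_ideal_S tri (plusL tri \<mu>)"
proof -
  have Z: "plusL tri \<mu> 0 = 1"
    unfolding plusL_def sng0 using fL(6)[OF f zero_Lset zero_Lset] by simp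
  have A: "min (plusL tri \<mu> x) (plusL tri \<mu> y) \<le> plusL tri \<mu> (x + y)" for x y
  proof (rule plusL_greatest)
    fix \<gamma>
    have e: "cls tri {#(x+y,\<gamma>)#} = L_add tri (cls tri {#(x,\<gamma>)#}) (cls tri {#(y,\<gamma>)#})"
      by (rule Lset_eq[OF sng_Lset L_add_Lset[OF sng_Lset sng_Lset]])
         (simp add: fun_eq_iff L_add_gev[OF sng_Lset sng_Lset] sng_gev ld)
    have "min (plusL tri \<mu> x) (plusL tri \<mu> y) \<le> min (\<mu> (cls tri {#(x,\<gamma>)#})) (\<mu> (cls tri {#(y,\<gamma>)#}))"
      using plusL_lower[OF f] by (meson min.mono)
    also have "\<dots> \<le> \<mu> (cls tri {#(x+y,\<gamma>)#})" unfolding e by (rule fL(3)[OF f sng_Lset sng_Lset])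
    finally show "min (plusL tri \<mu> x) (plusL tri \<mu> y) \<le> \<mu> (cls tri {#(x+y,\<gamma>)#})" .
  qed
  have M: "plusL tri \<mu> y \<le> plusL tri \<mu> (tri x \<gamma> y) \<and> plusL tri \<mu> x \<le> plusL tri \<mu> (tri x \<gamma> y)" for x \<gamma> y
  proof -
    have e: "cls tri {#(tri x \<gamma> y,\<beta>)#} = L_mult tri (cls tri {#(x,\<gamma>)#}) (cls tri {#(y,\<beta>)#})" for \<beta>
      by (rule Lset_eq[OF sng_Lset L_mult_Lset[OF sng_Lset sng_Lset]])
         (simp add: fun_eq_iff L_mult_gev[OF sng_Lset sng_Lset] sng_gev asc)
    show ?thesis
    proof
      show "plusL tri \<mu> y \<le> plusL tri \<mu> (tri x \<gamma> y)"
      proof (rule plusL_greatest)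
        fix \<beta>
        have "\<mu> (cls tri {#(y,\<beta>)#}) \<le> \<mu> (L_mult tri (cls tri {#(x,\<gamma>)#}) (cls tri {#(y,\<beta>)#}))"
          by (rule fL(4)[OF f sng_Lset sng_Lset])
        then show "plusL tri \<mu> y \<le> \<mu> (cls tri {#(tri x \<gamma> y,\<beta>)#})"
          unfolding e using plusL_lower[OF f, of y \<beta>] by linarith
      qed
      show "plusL tri \<mu> x \<le> plusL tri \<mu> (tri x \<gamma> y)"
      proof (rule plusL_greatest)
        fix \<beta>
        have "\<mu> (cls tri {#(x,\<gamma>)#}) \<le> \<mu> (L_mult tri (cls tri {#(x,\<gamma>)#}) (cls tri {#(y,\<beta>)#}))"
          by (rule fL(5)[OF f sng_Lset sng_Lset])
        then show "plusL tri \<mu> x \<le> \<mu> (cls tri {#(tri x \<gamma> y,\<beta>)#})"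
          unfolding e using plusL_lower[OF f, of x \<gamma>] by linarith
      qed
    qed
  qed
  show ?thesis unfolding fuzzy_ideal_S_def
  proof (intro conjI allI)
    show "\<exists>x. plusL tri \<mu> x \<noteq> 0" using Z by (intro exI[of _ 0]) simp
  qed (use plusL_bounds[OF f] Z A M in auto)
qed

lemma plusS_plusL: assumes f: "fuzzy_ideal_L tri \<mu>" and lu: "has_left_unity tri" and P: "P \<in> Lset tri"
  shows "plusS tri (plusL tri \<mu>) P = \<mu> P"
proof -
  have fs: "fuzzy_ideal_S tri (plusL tri \<mu>)" by (rule plusL_ideal[OF f])
  have ge: "\<mu> P \<le> plusS tri (plusL tri \<mu>) P"
  proof (rule plusS_greatest, rule plusL_greatest)
    fix s \<gamma>
    have "cls tri {#(gev tri (rep P) s, \<gamma>)#} = L_mult tri P (cls tri {#(s,\<gamma>)#})"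
      by (rule Lset_eq[OF sng_Lset L_mult_Lset[OF P sng_Lset]])
         (simp add: fun_eq_iff L_mult_gev[OF P sng_Lset] sng_gev gev_tri_left)
    then show "\<mu> P \<le> \<mu> (cls tri {#(gev tri (rep P) s, \<gamma>)#})"
      using fL(5)[OF f P sng_Lset] by simp
  qed
  obtain E where E: "E \<in> Lset tri" "\<forall>a. gev tri (rep E) a = a"
    using lu unfolding has_left_unity_def by blast
  define M where "M = image_mset (\<lambda>(e,\<delta>). (gev tri (rep P) e, \<delta>)) (rep E)"
  have Mne: "M \<noteq> {#}" using Lset_rep[OF E(1)] by (simp add: M_def)
  have PM: "P = cls tri M"
    by (rule Lset_eq[OF P cls_Lset]) (use Mne rep_cls[of M] E(2) in \<open>simp_all add: fun_eq_iff M_def gev_img_gev\<close>)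
  have le: "plusS tri (plusL tri \<mu>) P \<le> \<mu> (cls tri M)"
  proof (rule mu_cls_ge[OF f Mne], intro ballI)
    fix m assume "m \<in># M"
    then obtain e \<delta> where m: "m = (gev tri (rep P) e, \<delta>)" by (auto simp: M_def)
    show "plusS tri (plusL tri \<mu>) P \<le> \<mu> (cls tri {#m#})"
      unfolding m using plusS_lower[OF fs, of P e] plusL_lower[OF f, of "gev tri (rep P) e" \<delta>] by linarith
  qed
  with ge PM show ?thesis by simp
qed


lemma plusS_lower': "(\<And>x. 0 \<le> \<sigma> x) \<Longrightarrow> plusS tri \<sigma> P \<le> \<sigma> (gev tri (rep P) s)"
  unfolding plusS_def by (rule cINF_lower) (auto intro!: bdd_belowI2)

lemma oS_upper: assumes f1: "fuzzy_ideal_S tri \<sigma>1" and f2: "fuzzy_ideal_S tri \<sigma>2" and x: "x = u + v"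
  shows "min (\<sigma>1 u) (\<sigma>2 v) \<le> oplusS \<sigma>1 \<sigma>2 x"
  unfolding oplusS_def
proof (rule cSUP_upper2[where x="(u,v)"])
  show "bdd_above ((\<lambda>(u, v). min (\<sigma>1 u) (\<sigma>2 v)) ` {(u, v). x = u + v})"
    by (rule bdd_aboveI2[where M=1]) (auto simp: fS(2)[OF f1] min.coboundedI1)
qed (use x in auto)

lemma oS_bounds: assumes f1: "fuzzy_ideal_S tri \<sigma>1" and f2: "fuzzy_ideal_S tri \<sigma>2"
  shows "0 \<le> oplusS \<sigma>1 \<sigma>2 x \<and> oplusS \<sigma>1 \<sigma>2 x \<le> 1"
proof
  show "0 \<le> oplusS \<sigma>1 \<sigma>2 x"
    using oS_upper[OF f1 f2, of x x 0] fS(1)[OF f1, of x] fS(1)[OF f2, of 0] by simp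
  show "oplusS \<sigma>1 \<sigma>2 x \<le> 1" unfolding oplusS_def
    by (rule cSUP_least) (auto simp: fS(2)[OF f1] min.coboundedI1 intro: exI[of _ x] exI[of _ 0])
qed

lemma oS_approx: assumes f1: "fuzzy_ideal_S tri \<sigma>1" and f2: "fuzzy_ideal_S tri \<sigma>2"
  and t: "t < oplusS \<sigma>1 \<sigma>2 x"
  shows "\<exists>u v. x = u + v \<and> t < min (\<sigma>1 u) (\<sigma>2 v)"
proof -
  have "bdd_above ((\<lambda>(u, v). min (\<sigma>1 u) (\<sigma>2 v)) ` {(u, v). x = u + v})"
    by (rule bdd_aboveI2[where M=1]) (auto simp: fS(2)[OF f1] min.coboundedI1)
  moreover have "{(u, v). x = u + v} \<noteq> {}" by (auto intro: exI[of _ x] exI[of _ 0])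
  ultimately show ?thesis using t unfolding oplusS_def by (subst (asm) less_cSUP_iff) auto
qed

lemma plusS_oplus:
  assumes f1: "fuzzy_ideal_S tri \<sigma>1" and f2: "fuzzy_ideal_S tri \<sigma>2"
    and lu: "has_left_unity tri" and P: "P \<in> Lset tri"
  shows "plusS tri (oplusS \<sigma>1 \<sigma>2) P = oplusL tri (plusS tri \<sigma>1) (plusS tri \<sigma>2) P"
proof -
  let ?A = "{(U, V). U \<in> Lset tri \<and> V \<in> Lset tri \<and> P = L_add tri U V}"
  let ?f = "\<lambda>(U, V). min (plusS tri \<sigma>1 U) (plusS tri \<sigma>2 V)"
  have nn: "\<And>x. 0 \<le> oplusS \<sigma>1 \<sigma>2 x" using oS_bounds[OF f1 f2] by blast
  have PZ: "L_add tri P (L_zero tri) = P"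
    by (rule Lset_eq[OF L_add_Lset[OF P zero_Lset] P]) (simp add: fun_eq_iff L_add_gev[OF P zero_Lset] zero_gev)
  have Ane: "?A \<noteq> {}" using P zero_Lset PZ by auto
  have bdd: "bdd_above (?f ` ?A)"
    by (rule bdd_aboveI2[where M=1]) (auto simp: plusS_bounds[OF f1] min.coboundedI1)
  have le1: "oplusL tri (plusS tri \<sigma>1) (plusS tri \<sigma>2) P \<le> plusS tri (oplusS \<sigma>1 \<sigma>2) P"
    unfolding oplusL_def
  proof (rule cSUP_least[OF Ane])
    fix p assume "p \<in> ?A"
    then obtain U V where p: "p = (U,V)" and UV: "U \<in> Lset tri" "V \<in> Lset tri" "P = L_add tri U V" by auto
    show "?f p \<le> plusS tri (oplusS \<sigma>1 \<sigma>2) P"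
    proof (rule plusS_greatest)
      fix s
      have "?f p \<le> min (\<sigma>1 (gev tri (rep U) s)) (\<sigma>2 (gev tri (rep V) s))"
        unfolding p using plusS_lower[OF f1, of U s] plusS_lower[OF f2, of V s] by (simp add: min.coboundedI1 min.coboundedI2)
      also have "\<dots> \<le> oplusS \<sigma>1 \<sigma>2 (gev tri (rep P) s)"
        by (rule oS_upper[OF f1 f2]) (simp add: UV(3) L_add_gev[OF UV(1,2)])
      finally show "?f p \<le> oplusS \<sigma>1 \<sigma>2 (gev tri (rep P) s)" .
    qed
  qed
  obtain E where E: "E \<in> Lset tri" "\<forall>a. gev tri (rep E) a = a"
    using lu unfolding has_left_unity_def by blast
  have Ene: "rep E \<noteq> {#}" using Lset_rep[OF E(1)] by simp
  define t where "t = plusS tri (oplusS \<sigma>1 \<sigma>2) P"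
  define g where "g = gev tri (rep P)"
  have t1: "t \<le> 1" unfolding t_def using plusS_lower'[where \<sigma>="oplusS \<sigma>1 \<sigma>2" and P=P and s=0, OF nn] nn oS_bounds[OF f1 f2, of "gev tri (rep P) 0"] by linarith
  have tg: "t \<le> oplusS \<sigma>1 \<sigma>2 (g e)" for e unfolding t_def g_def by (rule plusS_lower'[where \<sigma>="oplusS \<sigma>1 \<sigma>2", OF nn])
  have le2: "t \<le> oplusL tri (plusS tri \<sigma>1) (plusS tri \<sigma>2) P"
  proof (rule field_le_epsilon)
    fix \<epsilon> :: real assume \<epsilon>: "0 < \<epsilon>"
    have "\<forall>z. \<exists>p. t - \<epsilon> < oplusS \<sigma>1 \<sigma>2 z \<longrightarrow> z = fst p + snd p \<and> t - \<epsilon> < min (\<sigma>1 (fst p)) (\<sigma>2 (snd p))"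
      using oS_approx[OF f1 f2] by fastforce
    then obtain h where h: "\<And>z. t - \<epsilon> < oplusS \<sigma>1 \<sigma>2 z \<Longrightarrow> z = fst (h z) + snd (h z) \<and> t - \<epsilon> < min (\<sigma>1 (fst (h z))) (\<sigma>2 (snd (h z)))"
      by metis
    define fu where "fu = (\<lambda>z. fst (h z))"
    define fv where "fv = (\<lambda>z. snd (h z))"
    have hg: "g e = fu (g e) + fv (g e)" "t - \<epsilon> < \<sigma>1 (fu (g e))" "t - \<epsilon> < \<sigma>2 (fv (g e))" for e
      using h[of "g e"] tg[of e] \<epsilon> unfolding fu_def fv_def by auto
    define MU where "MU = image_mset (\<lambda>(e,\<delta>). (fu (g e), \<delta>)) (rep E)"
    define MV where "MV = image_mset (\<lambda>(e,\<delta>). (fv (g e), \<delta>)) (rep E)"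
    have MUne: "MU \<noteq> {#}" "MV \<noteq> {#}" using Ene by (auto simp: MU_def MV_def)
    have UL: "cls tri MU \<in> Lset tri" "cls tri MV \<in> Lset tri" using MUne by (auto intro: cls_Lset)
    have gU: "gev tri (rep (cls tri MU)) = gev tri MU" and gV: "gev tri (rep (cls tri MV)) = gev tri MV"
      using rep_cls MUne by auto
    have sum: "P = L_add tri (cls tri MU) (cls tri MV)"
    proof (rule Lset_eq[OF P L_add_Lset[OF UL]])
      have "gev tri MU a + gev tri MV a = g a" for a
        unfolding MU_def MV_def
        by (subst gev_decomp) (use hg(1) E(2) in \<open>auto simp: gev_img_gev g_def\<close>)
      then show "gev tri (rep P) = gev tri (rep (L_add tri (cls tri MU) (cls tri MV)))"
        by (simp add: fun_eq_iff L_add_gev[OF UL] gU gV g_def)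
    qed
    have pU: "t - \<epsilon> \<le> plusS tri \<sigma>1 (cls tri MU)"
    proof (rule plusS_greatest)
      fix s show "t - \<epsilon> \<le> \<sigma>1 (gev tri (rep (cls tri MU)) s)"
        unfolding gU unfolding MU_def
        by (rule sigma_gev_ge[OF f1]) (use t1 \<epsilon> in simp, clarsimp, metis hg(2) fS(5)[OF f1] less_imp_le order_trans)
    qed
    have pV: "t - \<epsilon> \<le> plusS tri \<sigma>2 (cls tri MV)"
    proof (rule plusS_greatest)
      fix s show "t - \<epsilon> \<le> \<sigma>2 (gev tri (rep (cls tri MV)) s)"
        unfolding gV unfolding MV_def
        by (rule sigma_gev_ge[OF f2]) (use t1 \<epsilon> in simp, clarsimp, metis hg(3) fS(5)[OF f2] less_imp_le order_trans)
    qed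
    have "t - \<epsilon> \<le> ?f (cls tri MU, cls tri MV)" using pU pV by simp
    also have "\<dots> \<le> oplusL tri (plusS tri \<sigma>1) (plusS tri \<sigma>2) P"
      unfolding oplusL_def by (rule cSUP_upper[OF _ bdd]) (use UL sum in auto)
    finally show "t \<le> oplusL tri (plusS tri \<sigma>1) (plusS tri \<sigma>2) P + \<epsilon>" by simp
  qed
  from le1 le2 show ?thesis unfolding t_def by simp
qed

end

theorem proposition3p3:
  fixes tri :: "'s::comm_monoid_add \<Rightarrow> 'g::comm_monoid_add \<Rightarrow> 's \<Rightarrow> 's"
    and \<sigma> \<sigma>1 \<sigma>2 :: "'s \<Rightarrow> real"
    and \<mu> \<mu>1 \<mu>2 :: "('s, 'g) lop \<Rightarrow> real"
  assumes "gamma_semiring_zero tri"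
    and "has_left_unity tri" and "has_right_unity tri"
    and "fuzzy_ideal_S tri \<sigma>" and "fuzzy_ideal_S tri \<sigma>1" and "fuzzy_ideal_S tri \<sigma>2"
    and "fuzzy_ideal_L tri \<mu>" and "fuzzy_ideal_L tri \<mu>1" and "fuzzy_ideal_L tri \<mu>2"
  shows
    "(fuzzy_ideal_L tri (plusS tri \<sigma>) \<and>
       ((\<exists>x y. \<sigma> x \<noteq> \<sigma> y) \<longrightarrow>
          (\<exists>P \<in> Lset tri. \<exists>Q \<in> Lset tri. plusS tri \<sigma> P \<noteq> plusS tri \<sigma> Q)))
   \<and> plusL tri (plusS tri \<sigma>) = \<sigma>
   \<and> (\<sigma>1 \<noteq> \<sigma>2 \<longrightarrow> (\<exists>P \<in> Lset tri. plusS tri \<sigma>1 P \<noteq> plusS tri \<sigma>2 P))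
   \<and> (\<forall>P \<in> Lset tri. plusS tri (oplusS \<sigma>1 \<sigma>2) P
                       = oplusL tri (plusS tri \<sigma>1) (plusS tri \<sigma>2) P)
   \<and> (\<forall>P \<in> Lset tri. plusS tri (\<lambda>x. min (\<sigma>1 x) (\<sigma>2 x)) P
                       = min (plusS tri \<sigma>1 P) (plusS tri \<sigma>2 P))
   \<and> ((\<forall>x. \<sigma>1 x \<le> \<sigma>2 x) \<longrightarrow> (\<forall>P \<in> Lset tri. plusS tri \<sigma>1 P \<le> plusS tri \<sigma>2 P))
   \<and> (fuzzy_ideal_S tri (plusL tri \<mu>) \<and>
       ((\<exists>P \<in> Lset tri. \<exists>Q \<in> Lset tri. \<mu> P \<noteq> \<mu> Q) \<longrightarrow>
          (\<exists>x y. plusL tri \<mu> x \<noteq> plusL tri \<mu> y)))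
   \<and> (\<forall>P \<in> Lset tri. plusS tri (plusL tri \<mu>) P = \<mu> P)
   \<and> ((\<forall>P \<in> Lset tri. \<mu>1 P \<le> \<mu>2 P) \<longrightarrow> (\<forall>x. plusL tri \<mu>1 x \<le> plusL tri \<mu>2 x))"
  proof -
  interpret gsz tri by (rule gsz.intro) (rule assms(1))
  note f = assms(4-9)
  have i1: "fuzzy_ideal_L tri (plusS tri \<sigma>)" by (rule plusS_ideal[OF f(1)])
  have ii: "plusL tri (plusS tri \<sigma>) = \<sigma>" by (rule plusL_plusS[OF f(1) assms(3)])
  have i2: "(\<exists>x y. \<sigma> x \<noteq> \<sigma> y) \<longrightarrow> (\<exists>P \<in> Lset tri. \<exists>Q \<in> Lset tri. plusS tri \<sigma> P \<noteq> plusS tri \<sigma> Q)"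
  proof (rule impI, rule ccontr)
    assume ne: "\<exists>x y. \<sigma> x \<noteq> \<sigma> y" and "\<not> (\<exists>P \<in> Lset tri. \<exists>Q \<in> Lset tri. plusS tri \<sigma> P \<noteq> plusS tri \<sigma> Q)"
    then obtain k where c: "\<And>P. P \<in> Lset tri \<Longrightarrow> plusS tri \<sigma> P = k" using zero_Lset by blast
    have "\<sigma> x = k" for x
      using fun_cong[OF ii, of x] unfolding plusL_def by (simp add: c[OF sng_Lset])
    with ne show False by metis
  qed
  have iii: "\<sigma>1 \<noteq> \<sigma>2 \<longrightarrow> (\<exists>P \<in> Lset tri. plusS tri \<sigma>1 P \<noteq> plusS tri \<sigma>2 P)"
  proof (rule impI, rule ccontr)
    assume ne: "\<sigma>1 \<noteq> \<sigma>2" and "\<not> (\<exists>P \<in> Lset tri. plusS tri \<sigma>1 P \<noteq> plusS tri \<sigma>2 P)"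
    then have c: "\<And>P. P \<in> Lset tri \<Longrightarrow> plusS tri \<sigma>1 P = plusS tri \<sigma>2 P" by blast
    have "plusL tri (plusS tri \<sigma>1) = plusL tri (plusS tri \<sigma>2)"
      unfolding plusL_def by (simp add: c[OF sng_Lset])
    with ne show False using plusL_plusS[OF f(2) assms(3)] plusL_plusS[OF f(3) assms(3)] by simp
  qed
  have iv: "\<forall>P \<in> Lset tri. plusS tri (oplusS \<sigma>1 \<sigma>2) P = oplusL tri (plusS tri \<sigma>1) (plusS tri \<sigma>2) P"
    using plusS_oplus[OF f(2) f(3) assms(2)] by blast
  have v: "\<forall>P \<in> Lset tri. plusS tri (\<lambda>x. min (\<sigma>1 x) (\<sigma>2 x)) P = min (plusS tri \<sigma>1 P) (plusS tri \<sigma>2 P)"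
  proof
    fix P
    have nn: "\<And>x. 0 \<le> min (\<sigma>1 x) (\<sigma>2 x)" using fS(1)[OF f(2)] fS(1)[OF f(3)] by simp
    have a: "plusS tri (\<lambda>x. min (\<sigma>1 x) (\<sigma>2 x)) P \<le> plusS tri \<sigma>1 P"
      by (rule plusS_greatest) (use plusS_lower'[where \<sigma>="\<lambda>x. min (\<sigma>1 x) (\<sigma>2 x)" and P=P, OF nn] in \<open>simp\<close>)
    have b: "plusS tri (\<lambda>x. min (\<sigma>1 x) (\<sigma>2 x)) P \<le> plusS tri \<sigma>2 P"
      by (rule plusS_greatest) (use plusS_lower'[where \<sigma>="\<lambda>x. min (\<sigma>1 x) (\<sigma>2 x)" and P=P, OF nn] in \<open>simp\<close>)
    have c: "min (plusS tri \<sigma>1 P) (plusS tri \<sigma>2 P) \<le> plusS tri (\<lambda>x. min (\<sigma>1 x) (\<sigma>2 x)) P"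
      by (rule plusS_greatest) (simp add: plusS_lower[OF f(2)] plusS_lower[OF f(3)] min.coboundedI1 min.coboundedI2)
    show "plusS tri (\<lambda>x. min (\<sigma>1 x) (\<sigma>2 x)) P = min (plusS tri \<sigma>1 P) (plusS tri \<sigma>2 P)"
      using a b c by simp
  qed
  have vi: "(\<forall>x. \<sigma>1 x \<le> \<sigma>2 x) \<longrightarrow> (\<forall>P \<in> Lset tri. plusS tri \<sigma>1 P \<le> plusS tri \<sigma>2 P)"
  proof (intro impI ballI, rule plusS_greatest)
    fix P s assume h: "\<forall>x. \<sigma>1 x \<le> \<sigma>2 x"
    show "plusS tri \<sigma>1 P \<le> \<sigma>2 (gev tri (rep P) s)"
      using plusS_lower[OF f(2), of P s] h[rule_format, of "gev tri (rep P) s"] by linarith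
  qed
  have vii1: "fuzzy_ideal_S tri (plusL tri \<mu>)" by (rule plusL_ideal[OF f(4)])
  have viii: "\<forall>P \<in> Lset tri. plusS tri (plusL tri \<mu>) P = \<mu> P"
    using plusS_plusL[OF f(4) assms(2)] by blast
  have vii2: "(\<exists>P \<in> Lset tri. \<exists>Q \<in> Lset tri. \<mu> P \<noteq> \<mu> Q) \<longrightarrow> (\<exists>x y. plusL tri \<mu> x \<noteq> plusL tri \<mu> y)"
  proof (rule impI, rule ccontr)
    assume ne: "\<exists>P \<in> Lset tri. \<exists>Q \<in> Lset tri. \<mu> P \<noteq> \<mu> Q" and "\<not> (\<exists>x y. plusL tri \<mu> x \<noteq> plusL tri \<mu> y)"
    then obtain k where c: "\<And>x. plusL tri \<mu> x = k" by blast
    have "\<mu> P = k" if "P \<in> Lset tri" for P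
      using viii that unfolding plusS_def by (simp add: c)
    with ne show False by metis
  qed
  have ix: "(\<forall>P \<in> Lset tri. \<mu>1 P \<le> \<mu>2 P) \<longrightarrow> (\<forall>x. plusL tri \<mu>1 x \<le> plusL tri \<mu>2 x)"
  proof (intro impI allI, rule plusL_greatest)
    fix x \<gamma> assume h: "\<forall>P \<in> Lset tri. \<mu>1 P \<le> \<mu>2 P"
    show "plusL tri \<mu>1 x \<le> \<mu>2 (cls tri {#(x, \<gamma>)#})"
      using plusL_lower[OF f(5), of x \<gamma>] h sng_Lset[of x \<gamma>] by fastforce
  qed
  show ?thesis by (intro conjI) (fact i1 i2 ii iii iv v vi vii1 vii2 viii ix)+
qed

end
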